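(* Let $p>5$ be a prime with $p\equiv 3\pmod 4$. Then $$\binom{-1/4}{\frac{p-1}{2}}^{-1}\equiv\frac{(-1)^{(p+1)/4}}{\binom{(p-1)/2}{(p-3)/4}}\bigl(1-3p+p\,q_p(2)\bigr)\pmod{p^2}.$$
   Context: $q_p(2)=(2^{p-1}-1)/p$ is the Fermat quotient. For a rational $a$ and integer $n\ge0$, $\binom{a}{n}=a(a-1)\cdots(a-n+1)/n!$. For rationals $a,b$ with denominators prime to $p$, $a\equiv b\pmod{p^m}$ means $(a-b)/p^m$ has denominator prime to $p$. *)

theory Defs
  imports Complex_Main "HOL-Computational_Algebra.Primes"
begin

definition p_integral :: "nat \<Rightarrow> rat \<Rightarrow> bool" where
  "p_integral p x \<longleftrightarrow> coprime (snd (quotient_of x)) (int p)"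

definition rat_cong :: "rat \<Rightarrow> rat \<Rightarrow> nat \<Rightarrow> nat \<Rightarrow> bool" where
  "rat_cong a b p m \<longleftrightarrow> p_integral p a \<and> p_integral p b \<and>
     p_integral p ((a - b) / of_nat p ^ m)"

definition fermat_quot2 :: "nat \<Rightarrow> rat" where
  "fermat_quot2 p = (2 ^ (p - 1) - 1) / of_nat p"

end

theory Submission imports Defs "HOL-Number_Theory.Number_Theory" begin

lemma pint:
  fixes x y :: int
  assumes "y \<noteq> 0" "coprime y (int p)"
  shows "p_integral p (of_int x / of_int y)"
proof -
  obtain n d where q: "quotient_of (of_int x / of_int y :: rat) = (n, d)" by (cases "quotient_of (of_int x / of_int y :: rat)")
  have r: "(of_int x / of_int y :: rat) = of_int n / of_int d" using quotient_of_div[OF q] .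
  have d0: "d > 0" using quotient_of_denom_pos[OF q] .
  have cop: "coprime n d" using quotient_of_coprime[OF q] .
  have "(of_int (x * d) :: rat) = of_int (n * y)" using r assms(1) d0
    by (simp add: field_simps)
  hence e: "x * d = n * y" by (simp only: of_int_eq_iff)
  hence "d dvd n * y" by (metis dvd_triv_right)
  hence "d dvd y" using cop by (simp add: coprime_dvd_mult_right_iff coprime_commute)
  then obtain e where "y = d * e" by blast
  hence "coprime d (int p)" using assms(2) by simp
  thus ?thesis unfolding p_integral_def q by simp
qed

lemma prod_split: "(\<Prod>k<a+b. f k) = (\<Prod>k<a. f k) * (\<Prod>j<b. f (a+j))" for f :: "nat \<Rightarrow> 'a::comm_monoid_mult"
  by (induction b) (auto simp: mult_ac)

lemma F1aux: "4*(2*x+2)*(2*x+3)*(A*B*C) = (A*(4*x+2+4))*(4*B)*((x+1)*C)" for x A B C :: int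
  by (simp add: algebra_simps)

lemma F1: "(2::int)^(2*m+1) * fact (2*m+1) = (\<Prod>k<m+1. of_nat (4*k+2)) * 4^m * fact m"
proof (induction m)
  case 0 then show ?case by simp
next
  case (Suc m)
  have a: "2*Suc m+1 = Suc (Suc (2*m+1))" by simp
  have "(2::int)^(2*Suc m+1) * fact (2*Suc m+1) = (2*(2*2^(2*m+1))) * (of_nat (Suc (Suc (2*m+1))) * (of_nat (Suc (2*m+1)) * fact (2*m+1)))"
    by (simp only: a power_Suc fact_Suc)
  also have "\<dots> = 4*(2*int m+2)*(2*int m+3) * ((2::int)^(2*m+1) * fact (2*m+1))"
    by (simp add: algebra_simps)
  also have "\<dots> = 4*(2*int m+2)*(2*int m+3) * ((\<Prod>k<m+1. of_nat (4*k+2)) * 4^m * fact m)" using Suc by simp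
  also have "\<dots> = ((\<Prod>k<m+1. of_nat (4*k+2)) * (4*int m+2+4)) * (4 * 4^m) * ((int m+1) * fact m)"
    by (rule F1aux)
  also have "\<dots> = (\<Prod>k<Suc m+1. of_nat (4*k+2)) * 4^(Suc m) * fact (Suc m)"
  proof -
    have "(\<Prod>k<Suc m+1. (of_nat (4*k+2)::int)) = (\<Prod>k<m+1. of_nat (4*k+2)) * of_nat (4*(m+1)+2)"
      by (simp only: Suc_eq_plus1[symmetric] prod.lessThan_Suc)
    moreover have "(of_nat (4*(m+1)+2)::int) = 4*int m+2+4" by simp
    moreover have "(4::int)^(Suc m) = 4*4^m" by simp
    moreover have "(fact (Suc m)::int) = (int m+1) * fact m" by (simp add: fact_Suc)
    ultimately show ?thesis by simp
  qed
  finally show ?case .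
qed
lemma F2:
  fixes m :: nat and p :: int
  assumes "p = 4*m+3"
  shows "(\<Prod>k<2*m+1. of_nat (4*k+1)) * (2*p-1) = (\<Prod>k<m+1. p^2 - (of_nat (4*k+2))^2)"
proof -
  have A: "(\<Prod>k<m+1. (of_nat (4*k+1)::int)) = (\<Prod>k<m+1. p - of_nat (4*k+2))"
  proof -
    have "(\<Prod>k<m+1. p - of_nat (4*k+2)) = (\<Prod>k<m+1. p - of_nat (4*(m+1 - Suc k)+2))"
      by (rule prod.nat_diff_reindex[symmetric])
    also have "\<dots> = (\<Prod>k<m+1. (of_nat (4*k+1)::int))"
      by (rule prod.cong) (auto simp: assms of_nat_diff)
    finally show ?thesis by simp
  qed
  have B: "(\<Prod>j<m. (of_nat (4*(m+1+j)+1)::int)) * (2*p-1) = (\<Prod>k<m+1. p + of_nat (4*k+2))"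
  proof -
    have "(\<Prod>j<m. (of_nat (4*(m+1+j)+1)::int)) = (\<Prod>k<m. p + of_nat (4*k+2))"
      by (rule prod.cong) (auto simp: assms)
    moreover have "2*p-1 = p + of_nat (4*m+2)" by (simp add: assms)
    ultimately show ?thesis by (simp only: prod.lessThan_Suc Suc_eq_plus1[symmetric])
  qed
  have "(\<Prod>k<2*m+1. (of_nat (4*k+1)::int)) = (\<Prod>k<(m+1)+m. (of_nat (4*k+1)::int))"
  proof -
    have "2*m+1 = (m+1)+m" by simp
    thus ?thesis by (simp only:)
  qed
  also have "\<dots> = (\<Prod>k<m+1. of_nat (4*k+1)) * (\<Prod>j<m. of_nat (4*(m+1+j)+1))"
    by (rule prod_split)
  finally have "(\<Prod>k<2*m+1. (of_nat (4*k+1)::int)) * (2*p-1) =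
     (\<Prod>k<m+1. p - of_nat (4*k+2)) * (\<Prod>k<m+1. p + of_nat (4*k+2))"
    using A B by (simp add: mult.assoc)
  also have "\<dots> = (\<Prod>k<m+1. (p - of_nat (4*k+2)) * (p + of_nat (4*k+2)))"
    by (simp only: prod.distrib)
  also have "\<dots> = (\<Prod>k<m+1. p^2 - (of_nat (4*k+2))^2)"
    by (rule prod.cong) (simp_all add: power2_eq_square algebra_simps)
  finally show ?thesis .
qed

lemma alg1:
  fixes s Q p P F G C N T S mm :: int
  assumes "G = (mm+1)*F" "p = 4*mm+3" "C*F*G = N" "Q*N^2 = T^2*S*F^2" "Q = 4*S"
  shows "(s*(Q - 3*p)*P - Q*N*C) * (F*G*4*(2*p-1)) = F^2 * (s*(Q - 3*p)*(p+1)*(P*(2*p-1)) - Q*(2*p-1)*T^2)"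
proof -
  have a: "Q*N*C*(F*G*4*(2*p-1)) = Q*N*(C*F*G)*4*(2*p-1)" by (simp add: ac_simps)
  also have "\<dots> = 4*(Q*N^2)*(2*p-1)" using assms(3) by (simp add: power2_eq_square ac_simps)
  also have "\<dots> = 4*(T^2*S*F^2)*(2*p-1)" using assms(4) by simp
  also have "\<dots> = F^2*((4*S)*(2*p-1)*T^2)" by (simp add: ac_simps)
  also have "\<dots> = F^2*(Q*(2*p-1)*T^2)" using assms(5) by simp
  finally have A: "Q*N*C*(F*G*4*(2*p-1)) = F^2*(Q*(2*p-1)*T^2)" .
  have B: "s*(Q - 3*p)*P*(F*G*4*(2*p-1)) = F^2*(s*(Q - 3*p)*(p+1)*(P*(2*p-1)))"
    using assms(1,2) by (simp add: power2_eq_square algebra_simps)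
  show ?thesis using A B by (simp add: right_diff_distrib left_diff_distrib)
qed

lemma alg2:
  fixes s Q p R T r k :: int
  assumes "R = -s*T^2 + p^2*r" "s*s = 1" "Q = 1 + p*k"
  shows "s*(Q - 3*p)*(p+1)*R - Q*(2*p-1)*T^2 = p^2 * (T^2*(3-3*k) + s*(Q-3*p)*(p+1)*r)"
proof -
  have "s*((1 + p*k) - 3*p)*(p+1)*(-s*T^2 + p^2*r) - (1 + p*k)*(2*p-1)*T^2
     = p^2 * (T^2*(3-3*k) + s*((1 + p*k)-3*p)*(p+1)*r) + (1 - s*s)*((1 + p*k) - 3*p)*(p+1)*T^2"
    by (simp add: algebra_simps power2_eq_square)
  thus ?thesis using assms by simp
qed

lemma core:
  fixes m p :: nat
  assumes pm: "p = 4*m+3" and pr: "prime p" and m1: "m \<ge> 1"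
  shows "(int p)^2 dvd (-1)^m * (4^(2*m+1) - 3*int p) * (\<Prod>k<2*m+1. of_nat (4*k+1))
           - 4^(2*m+1) * fact (2*m+1) * int ((2*m+1) choose m)"
proof -
  define n where "n = 2*m+1"
  define P :: int where "P = (\<Prod>k<2*m+1. of_nat (4*k+1))"
  define T :: int where "T = (\<Prod>k<m+1. of_nat (4*k+2))"
  define F :: int where "F = fact m"
  define G :: int where "G = fact (m+1)"
  define C :: int where "C = int (n choose m)"
  define N :: int where "N = fact n"
  define Q :: int where "Q = 4^n"
  define S :: int where "S = 16^m"
  define s :: int where "s = (-1)^m"
  have hG: "G = (int m+1)*F" unfolding G_def F_def by (simp add: fact_Suc)
  have hC: "C*F*G = N"
  proof -
    have "fact m * fact (n - m) * (n choose m) = (fact n :: nat)"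
      by (rule binomial_fact_lemma) (simp add: n_def)
    moreover have "n - m = m+1" by (simp add: n_def)
    ultimately have "fact m * fact (m+1) * (n choose m) = (fact n :: nat)" by simp
    hence "(fact m :: int) * fact (m+1) * int (n choose m) = fact n" by (metis of_nat_fact of_nat_mult)
    thus ?thesis unfolding C_def F_def G_def N_def by (simp only: mult_ac)
  qed
  have hQN: "Q*N^2 = T^2*S*F^2"
  proof -
    have "(2::int)^n * N = T * 4^m * F" unfolding n_def N_def T_def F_def using F1[of m] by simp
    hence "((2::int)^n * N)^2 = (T * 4^m * F)^2" by simp
    moreover have "((2::int)^n)^2 = Q"
    proof -
      have "((2::int)^n)^2 = (2^2)^n" by (metis power_mult mult.commute)
      thus ?thesis unfolding Q_def by simp
    qed
    moreover have "((4::int)^m)^2 = S"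
    proof -
      have "((4::int)^m)^2 = (4^2)^m" by (metis power_mult mult.commute)
      thus ?thesis unfolding S_def by simp
    qed
    ultimately show ?thesis by (simp add: power_mult_distrib)
  qed
  have hQS: "Q = 4*S" unfolding Q_def S_def n_def by (simp add: power_mult)
  have hss: "s*s = 1" unfolding s_def by (simp add: power_mult_distrib[symmetric])
  have hp: "int p = 4*int m+3" using pm by simp
  have e1: "(s*(Q - 3*int p)*P - Q*N*C) * (F*G*4*(2*int p-1)) = F^2 * (s*(Q - 3*int p)*(int p+1)*(P*(2*int p-1)) - Q*(2*int p-1)*T^2)"
    by (rule alg1[OF hG hp hC hQN hQS])
  have hR: "(int p)^2 dvd P*(2*int p-1) - (-s)*T^2"
  proof -
    have "[(\<Prod>k<m+1. (int p)^2 - (of_nat (4*k+2))^2) = (\<Prod>k<m+1. - ((of_nat (4*k+2))^2))] (mod (int p)^2)"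
      by (rule cong_prod) (simp add: cong_iff_dvd_diff)
    moreover have "(\<Prod>k<m+1. - ((of_nat (4*k+2))^2)) = (-s) * (T^2::int)"
    proof -
      have "(\<Prod>k<m+1. - ((of_nat (4*k+2))^2)) = (\<Prod>k<m+1. (-1) * ((of_nat (4*k+2))^2::int))" by simp
      also have "\<dots> = (\<Prod>k<m+1. (-1::int)) * (\<Prod>k<m+1. (of_nat (4*k+2))^2)" by (rule prod.distrib)
      also have "\<dots> = (-1)^(m+1) * (\<Prod>k<m+1. (of_nat (4*k+2))^2)" by (simp only: prod_constant card_lessThan)
      also have "\<dots> = (-s) * T^2" unfolding s_def T_def by (simp add: prod_power_distrib del: prod.lessThan_Suc)
      finally show ?thesis .
    qed
    ultimately show ?thesis using F2[of "int p" m] pm unfolding P_def by (simp add: cong_iff_dvd_diff)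
  qed
  then obtain r where hr: "P*(2*int p-1) - (-s)*T^2 = (int p)^2 * r" by blast
  have hR': "P*(2*int p-1) = -s*T^2 + (int p)^2*r" using hr by simp
  have "[2^(p-1) = 1] (mod p)"
  proof (rule fermat_theorem[OF pr])
    show "\<not> p dvd 2"
    proof
      assume "p dvd 2"
      hence "p \<le> 2" by (rule dvd_imp_le) simp
      thus False using pm by simp
    qed
  qed
  hence "[int (2^(p-1)) = int 1] (mod int p)" by (simp only: cong_int_iff)
  hence "int p dvd 2^(p-1) - 1" by (simp add: cong_iff_dvd_diff)
  moreover have "(2::int)^(p-1) = Q"
  proof -
    have "p - 1 = 2*n" using pm n_def by simp
    hence "(2::int)^(p-1) = (2^2)^n" by (simp only: power_mult)
    thus ?thesis unfolding Q_def by simp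
  qed
  ultimately obtain k where hk: "Q - 1 = int p * k" by auto
  have e2: "s*(Q - 3*int p)*(int p+1)*(P*(2*int p-1)) - Q*(2*int p-1)*T^2
     = (int p)^2 * (T^2*(3-3*k) + s*(Q-3*int p)*(int p+1)*r)"
    by (rule alg2[OF hR' hss]) (use hk in simp)
  have dw: "(int p)^2 dvd (s*(Q - 3*int p)*P - Q*N*C) * (F*G*4*(2*int p-1))"
    unfolding e1 e2 by simp
  have cop: "coprime ((int p)^2) (F*G*4*(2*int p-1))"
  proof -
    have pi: "prime (int p)" using pr by simp
    have "\<not> p dvd fact m" using pr pm by (simp add: prime_dvd_fact_iff)
    hence c1: "\<not> int p dvd F" unfolding F_def by (metis of_nat_dvd_iff of_nat_fact)
    have "\<not> p dvd fact (m+1)" by (subst prime_dvd_fact_iff[OF pr]) (use pm in simp)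
    hence c2: "\<not> int p dvd G" unfolding G_def by (metis of_nat_dvd_iff of_nat_fact)
    have c3: "\<not> int p dvd 4"
    proof
      assume "int p dvd 4"
      hence "int p \<le> 4" by (rule zdvd_imp_le) simp
      thus False using pm m1 by simp
    qed
    have c4: "\<not> int p dvd (2*int p - 1)"
    proof
      assume h: "int p dvd (2*int p - 1)"
      have "int p dvd 2*int p" by simp
      hence "int p dvd 2*int p - (2*int p - 1)" using h by (rule dvd_diff)
      hence "int p dvd 1" by simp
      hence "p = 1" by simp
      thus False using pm by simp
    qed
    have "coprime (int p) (F*G*4*(2*int p-1))"
      using pi c1 c2 c3 c4 by (simp add: prime_imp_coprime prime_dvd_mult_iff)
    thus ?thesis by simp
  qed
  have "(int p)^2 dvd s*(Q - 3*int p)*P - Q*N*C"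
    using dw cop by (simp add: coprime_dvd_mult_left_iff)
  thus ?thesis unfolding s_def Q_def P_def N_def C_def n_def by simp
qed


lemma diff_frac:
  fixes X Y U V K :: int and p :: nat
  assumes "Y \<noteq> 0" "V \<noteq> 0" "p \<noteq> 0" "X*V - U*Y = (int p)^2 * K"
  shows "(of_int X / of_int Y - of_int U / of_int V) / (of_nat p)^2 = (of_int K / of_int (Y*V) :: rat)"
proof -
  have "(of_int X / of_int Y - of_int U / of_int V :: rat) = of_int (X*V - U*Y) / of_int (Y*V)"
    using assms(1,2) by (simp add: field_simps)
  also have "\<dots> = of_int ((int p)^2 * K) / of_int (Y*V)" using assms(4) by simp
  finally show ?thesis using assms(1,2,3) by (simp add: field_simps)
qed

lemma pc_prod:
  fixes m p :: nat
  assumes pm: "p = 4*m+3" and pr: "prime p"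
  shows "\<not> int p dvd (\<Prod>k<2*m+1. of_nat (4*k+1)::int)"
proof
  assume "int p dvd (\<Prod>k<2*m+1. of_nat (4*k+1)::int)"
  moreover have "(\<Prod>k<2*m+1. of_nat (4*k+1)::int) = int (\<Prod>k<2*m+1. 4*k+1)" by (rule of_nat_prod[symmetric])
  ultimately have "int p dvd int (\<Prod>k<2*m+1. 4*k+1)" by (simp only:)
  hence "p dvd (\<Prod>k<2*m+1. 4*k+1)" by (simp only: int_dvd_int_iff)
  hence "\<exists>k\<in>{..<2*m+1}. p dvd 4*k+1" by (rule prime_dvd_prod_iff[OF finite_lessThan pr, THEN iffD1])
  then obtain k where k0: "k \<in> {..<2*m+1}" "p dvd 4*k+1" by (rule bexE)
  have k: "k < 2*m+1" "p dvd 4*k+1" using k0 by simp_all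
  obtain c where c: "4*k+1 = p*c" using k(2) by (rule dvdE)
  consider "c = 0" | "c = 1" | "c \<ge> 2" by linarith
  thus False
  proof cases
    case 1 thus ?thesis using c by simp
  next
    case 2
    hence "4*k+1 = 4*m+3" using c pm by simp
    hence "(4*k+1) mod 4 = (4*m+3) mod 4" by simp
    thus ?thesis by simp
  next
    case 3
    hence "p*c \<ge> p*2" by (rule mult_le_mono2)
    moreover have "p*2 = 8*m+6" using pm by simp
    ultimately have "4*k+1 \<ge> 8*m+6" using c by simp
    thus ?thesis using k(1) by simp
  qed
qed

lemma pc_choose:
  fixes m p :: nat
  assumes pm: "p = 4*m+3" and pr: "prime p"
  shows "\<not> p dvd ((2*m+1) choose m)"
proof
  assume h: "p dvd ((2*m+1) choose m)"
  have "fact m * fact (2*m+1 - m) * ((2*m+1) choose m) = (fact (2*m+1) :: nat)"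
    by (rule binomial_fact_lemma) simp
  hence "((2*m+1) choose m) dvd fact (2*m+1)" by (metis dvd_triv_right)
  hence "p dvd fact (2*m+1)" using h by (rule dvd_trans[rotated])
  hence "p \<le> 2*m+1" using prime_dvd_fact_iff[OF pr] by blast
  thus False using pm by simp
qed

theorem lemma2p3:
  fixes p :: nat
  assumes "prime p" and "p > 5" and "p mod 4 = 3"
  shows "rat_cong (inverse ((- 1 / 4 :: rat) gchoose ((p - 1) div 2)))
           ((- 1) ^ ((p + 1) div 4) / of_nat (((p - 1) div 2) choose ((p - 3) div 4))
              * (1 - 3 * of_nat p + of_nat p * fermat_quot2 p))
           p 2"
proof -
  define m where "m = p div 4"
  have pm: "p = 4*m+3" using assms(3) unfolding m_def by presburger
  have m1: "m \<ge> 1" using pm assms(2) by simp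
  define n where "n = 2*m+1"
  have e1: "(p - 1) div 2 = n" unfolding n_def using pm by simp
  have e2: "(p + 1) div 4 = m+1" using pm by simp
  have e3: "(p - 3) div 4 = m" using pm by simp
  define Pi :: int where "Pi = (\<Prod>k<2*m+1. of_nat (4*k+1))"
  define C :: nat where "C = n choose m"
  have pr: "prime p" by (rule assms(1))
  have pri: "prime (int p)" using pr by simp
  have Pi0: "\<not> int p dvd Pi" unfolding Pi_def by (rule pc_prod[OF pm pr])
  hence Pinz: "Pi \<noteq> 0" by auto
  have Pic: "coprime Pi (int p)" using prime_imp_coprime[OF pri Pi0] by (simp add: coprime_commute)
  have C0: "\<not> p dvd C" unfolding C_def n_def by (rule pc_choose[OF pm pr])
  hence Cnz: "int C \<noteq> 0" by (metis dvd_0_right of_nat_eq_0_iff)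
  have "\<not> int p dvd int C" using C0 by simp
  hence "coprime (int p) (int C)" by (rule prime_imp_coprime[OF pri])
  hence Cc: "coprime (int C) (int p)" by (rule coprime_commute[THEN iffD1])
  have poch: "pochhammer (1/4::rat) n = of_int Pi / 4^n"
  proof -
    have "pochhammer (1/4::rat) n = (\<Prod>i<n. of_nat (4*i+1) / 4)"
      unfolding pochhammer_prod atLeast0LessThan by (rule prod.cong) (auto simp: field_simps)
    also have "\<dots> = (\<Prod>i<n. of_nat (4*i+1)) / 4^n" by (simp add: prod_dividef)
    also have "\<dots> = of_int Pi / 4^n" unfolding Pi_def n_def by simp
    finally show ?thesis .
  qed
  have nodd: "odd n" unfolding n_def by simp
  have ga: "(-1/4::rat) gchoose n = - of_int Pi / of_int (4^n * fact n)"
    unfolding gbinomial_pochhammer using nodd poch by simp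
  have ha: "inverse ((-1/4::rat) gchoose n) = of_int (-(4^n * fact n)) / of_int Pi"
    unfolding ga by simp
  have pq: "of_nat p * fermat_quot2 p = (4::rat)^n - 1"
  proof -
    have "p - 1 = 2*n" using pm n_def by simp
    hence "(2::rat)^(p-1) = 4^n" by (simp add: power_mult)
    thus ?thesis unfolding fermat_quot2_def using pm by simp
  qed
  have hb: "(-1)^(m+1) / of_nat C * (1 - 3*of_nat p + of_nat p * fermat_quot2 p)
      = of_int ((-1)^(m+1)*(4^n - 3*int p)) / (of_int (int C) :: rat)"
    unfolding pq by simp
  have "(int p)^2 dvd (-1)^m * (4^(2*m+1) - 3*int p) * (\<Prod>k<2*m+1. of_nat (4*k+1))
           - 4^(2*m+1) * fact (2*m+1) * int ((2*m+1) choose m)"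
    by (rule core[OF pm pr m1])
  then obtain K where hK: "(-1)^m * (4^n - 3*int p) * Pi - 4^n * fact n * int C = (int p)^2 * K"
    unfolding Pi_def C_def n_def by blast
  have hD: "(-(4^n * fact n)) * int C - (-1)^(m+1)*(4^n - 3*int p) * Pi = (int p)^2 * K"
    using hK by (simp add: algebra_simps)
  show ?thesis
    unfolding e1 e2 e3 ha C_def[symmetric] hb rat_cong_def
  proof (intro conjI)
    show "p_integral p (of_int (-(4^n * fact n)) / of_int Pi)" by (rule pint[OF Pinz Pic])
    show "p_integral p (of_int ((-1)^(m+1)*(4^n - 3*int p)) / of_int (int C))" by (rule pint[OF Cnz Cc])
    have "(of_int (-(4^n * fact n)) / of_int Pi - of_int ((-1)^(m+1)*(4^n - 3*int p)) / of_int (int C)) / (of_nat p)^2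
       = (of_int K / of_int (Pi * int C) :: rat)"
      by (rule diff_frac) (use Pinz Cnz pm hD in \<open>simp_all add: mult.assoc\<close>)
    moreover have "p_integral p (of_int K / of_int (Pi * int C))"
      by (rule pint) (use Pinz Cnz Pic Cc in auto)
    ultimately show "p_integral p ((of_int (-(4^n * fact n)) / of_int Pi - of_int ((-1)^(m+1)*(4^n - 3*int p)) / of_int (int C)) / of_nat p ^ 2)"
      by simp
  qed
qed

end
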